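(* Let $(a_n)_{n\ge1}$ be a non-negative sequence and define $b_n = \sum_{l=1}^n 2^{l-n}a_l$. If $\sum_{n=1}^\infty a_n < +\infty$, then $\liminf_{n\to\infty} n b_n = 0$. *)

theory Defs
  imports "HOL-Analysis.Analysis"
begin

end

theory Submission
  imports Defs
begin

theorem lemma7:
  fixes a :: "nat \<Rightarrow> real"
  assumes nonneg: "\<And>n. n \<ge> 1 \<Longrightarrow> a n \<ge> 0"
    and summ: "summable (\<lambda>n. a (Suc n))"
  shows "liminf (\<lambda>n. ereal (real n * (\<Sum>l=1..n. (2::real) powr (real l - real n) * a l))) = 0"
proof -
  define b where "b n = (\<Sum>l=1..n. (2::real) powr (real l - real n) * a l)" for n
  have b0: "b n \<ge> 0" for n unfolding b_def
    by (intro sum_nonneg mult_nonneg_nonneg nonneg) auto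
  have brec: "b (Suc n) = b n / 2 + a (Suc n)" for n
  proof -
    have "b (Suc n) = (\<Sum>l=1..n. (2::real) powr (real l - real (Suc n)) * a l) + a (Suc n)"
      unfolding b_def by simp
    also have "(\<Sum>l=1..n. (2::real) powr (real l - real (Suc n)) * a l)
        = (\<Sum>l=1..n. (2::real) powr (real l - real n) * a l) / 2"
      unfolding sum_divide_distrib
    proof (rule sum.cong[OF refl])
      fix l
      have "(2::real) powr (real l - real (Suc n)) = 2 powr (real l - real n) / 2 powr 1"
        by (subst powr_diff[symmetric]) (simp add: algebra_simps)
      then show "(2::real) powr (real l - real (Suc n)) * a l = 2 powr (real l - real n) * a l / 2"
        by simp
    qed
    finally show ?thesis unfolding b_def by simp
  qed
  have ident: "sum b {..N} + b N = 2 * (\<Sum>i<N. a (Suc i))" for N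
  proof (induction N)
    case 0 then show ?case by (simp add: b_def)
  next
    case (Suc N) then show ?case by (simp add: brec)
  qed
  have Ale: "(\<Sum>i<N. a (Suc i)) \<le> suminf (\<lambda>n. a (Suc n))" for N
    by (rule sum_le_suminf[OF summ]) (auto intro: nonneg)
  have sb: "summable b"
  proof (rule summableI_nonneg_bounded[where x = "2 * suminf (\<lambda>n. a (Suc n))"])
    fix n show "0 \<le> b n" by (rule b0)
  next
    fix n
    have "(\<Sum>i<n. b i) \<le> sum b {..n}" by (intro sum_mono2) (auto intro: b0)
    also have "\<dots> \<le> 2 * (\<Sum>i<n. a (Suc i))" using ident[of n] b0[of n] by linarith
    also have "\<dots> \<le> 2 * suminf (\<lambda>n. a (Suc n))" using Ale[of n] by linarith
    finally show "(\<Sum>i<n. b i) \<le> 2 * suminf (\<lambda>n. a (Suc n))" .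
  qed
  let ?f = "\<lambda>n. ereal (real n * b n)"
  have ge: "0 \<le> liminf ?f"
    by (rule Liminf_bounded) (simp add: b0)
  have le: "liminf ?f \<le> 0"
  proof (rule ccontr)
    assume "\<not> liminf ?f \<le> 0"
    then have "0 < liminf ?f" by simp
    then obtain c :: real where c: "0 < c" "ereal c < liminf ?f"
    proof -
      obtain c :: real where "0 < ereal c" "ereal c < liminf ?f"
        using ereal_dense2[OF \<open>0 < liminf ?f\<close>] by blast
      then show ?thesis using that by simp
    qed
    have "eventually (\<lambda>n. ereal c < ?f n) sequentially" using c(2) by (rule less_LiminfD)
    then obtain N where N: "\<And>n. n \<ge> N \<Longrightarrow> c < real n * b n"
      unfolding eventually_sequentially by auto
    have "summable (\<lambda>n. c * inverse (real n))"
    proof (rule summable_comparison_test'[OF sb, of "Suc N"])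
      fix n assume "Suc N \<le> n"
      then have np: "real n > 0" and "c < real n * b n" using N[of n] by auto
      then have "c / real n < b n" by (simp add: divide_less_eq mult.commute)
      then show "norm (c * inverse (real n)) \<le> b n" using c np
        by (simp add: divide_inverse)
    qed
    then have "summable (\<lambda>n. inverse c * (c * inverse (real n)))"
      by (rule summable_mult)
    then have "summable (\<lambda>n. inverse (real n))" using c by simp
    then show False using not_summable_harmonic[where 'a=real] by simp
  qed
  show ?thesis using ge le unfolding b_def by simp
qed

end
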